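(* Let $p\ge2$ and $n,\ell,t$ be positive integers. Every $t$-tandem-duplication-correcting code $\mathcal{C}\subseteq\mathbb{Z}_p^n$ with respect to duplication length $\ell$ satisfies $$n-\log_p|\mathcal{C}|\ge t\log_p n-t\log_p\bigl(t(p-1)\bigr)-t(\ell+1).$$
   Context: $\mathbb{Z}_p=\{0,1,\dots,p-1\}$. For a word $\mathbf{x}$ over $\mathbb{Z}_p$ and $0\le i\le|\mathbf{x}|-\ell$, write $\mathbf{x}=\mathbf{u}\mathbf{v}\mathbf{w}$ with $|\mathbf{u}|=i$, $|\mathbf{v}|=\ell$; the tandem duplication of length $\ell$ at position $i$ produces $\mathbf{u}\mathbf{v}\mathbf{v}\mathbf{w}$. The ball $B_t^{\tau_\ell}(\mathbf{x})$ is the set of words obtainable from $\mathbf{x}$ by at most $t$ successive tandem duplications of length $\ell$. A code $\mathcal{C}\subseteq\mathbb{Z}_p^n$ is $t$-tandem-duplication-correcting (duplication length $\ell$) if $B_t^{\tau_\ell}(\mathbf{c})\cap B_t^{\tau_\ell}(\mathbf{c}')=\emptyset$ for all distinct $\mathbf{c},\mathbf{c}'\in\mathcal{C}$. *)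

theory Defs
  imports Complex_Main
begin

text \<open>Words over Z_p are lists of naturals with all entries below p.
  Tandem duplication of length l at position i (requires i + l \<le> |x|):
  x = u v w with |u| = i, |v| = l, giving u v v w.\<close>

definition tandem_dup :: "nat \<Rightarrow> nat \<Rightarrow> nat list \<Rightarrow> nat list" where
  "tandem_dup l i x = take i x @ take l (drop i x) @ drop i x"

definition tandem_step :: "nat \<Rightarrow> nat list \<Rightarrow> nat list \<Rightarrow> bool" where
  "tandem_step l x y \<longleftrightarrow> (\<exists>i. i + l \<le> length x \<and> y = tandem_dup l i x)"

definition tandem_ball :: "nat \<Rightarrow> nat \<Rightarrow> nat list \<Rightarrow> nat list set" where
  "tandem_ball l t x = {y. \<exists>k\<le>t. ((tandem_step l) ^^ k) x y}"

definition words :: "nat \<Rightarrow> nat \<Rightarrow> nat list set" where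
  "words p n = {x. length x = n \<and> (\<forall>a\<in>set x. a < p)}"

definition tandem_dup_correcting :: "nat \<Rightarrow> nat \<Rightarrow> nat \<Rightarrow> nat \<Rightarrow> nat list set \<Rightarrow> bool" where
  "tandem_dup_correcting p n l t C \<longleftrightarrow> C \<subseteq> words p n \<and>
     (\<forall>c\<in>C. \<forall>c'\<in>C. c \<noteq> c' \<longrightarrow> tandem_ball l t c \<inter> tandem_ball l t c' = {})"

end

theory Submission
  imports Defs
begin

definition rd :: "nat \<Rightarrow> nat \<Rightarrow> nat list \<Rightarrow> nat option list" where
  "rd p l x = map (\<lambda>j. if x!j = x!(j+l) then None else Some ((x!(j+l) + p - x!j) mod p)) [0..<length x - l]"

definition ins :: "nat \<Rightarrow> nat \<Rightarrow> 'a option list \<Rightarrow> 'a option list" where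
  "ins l k z = take k z @ replicate l None @ drop k z"

definition istep :: "nat \<Rightarrow> 'a option list \<Rightarrow> 'a option list \<Rightarrow> bool" where
  "istep l z z' \<longleftrightarrow> (\<exists>k\<le>length z. z' = ins l k z)"

definition wt :: "'a option list \<Rightarrow> nat" where
  "wt z = length (filter (\<lambda>e. e \<noteq> None) z)"

lemma length_rd[simp]: "length (rd p l x) = length x - l"
  by (simp add: rd_def)

lemma tandem_dup_alt: "i + l \<le> length x \<Longrightarrow> tandem_dup l i x = take (i+l) x @ drop i x"
  unfolding tandem_dup_def by (simp add: take_add)

lemma tandem_dup_nth: assumes "i + l \<le> length x" "k < length x + l"
  shows "tandem_dup l i x ! k = (if k < i + l then x!k else x!(k-l))"
  using assms by (auto simp: tandem_dup_alt nth_append min_def)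

lemma length_tandem_dup[simp]: "i + l \<le> length x \<Longrightarrow> length (tandem_dup l i x) = length x + l"
  by (simp add: tandem_dup_alt)

lemma set_tandem_dup: "i + l \<le> length x \<Longrightarrow> set (tandem_dup l i x) \<subseteq> set x"
  by (auto simp: tandem_dup_alt dest: in_set_takeD in_set_dropD)

lemma rd_tandem_dup: assumes "i + l \<le> length x"
  shows "rd p l (tandem_dup l i x) = ins l i (rd p l x)"
proof (rule nth_equalityI)
  show "length (rd p l (tandem_dup l i x)) = length (ins l i (rd p l x))"
    using assms by (simp add: ins_def)
next
  fix j assume "j < length (rd p l (tandem_dup l i x))"
  hence j: "j < length x" using assms by simp
  have L: "length (take i (rd p l x)) = i" using assms by simp
  show "rd p l (tandem_dup l i x) ! j = ins l i (rd p l x) ! j"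
  proof (cases "j < i")
    case True
    thus ?thesis using assms j by (simp add: rd_def ins_def nth_append tandem_dup_nth)
  next
    case False
    show ?thesis
    proof (cases "j < i + l")
      case True
      have "i \<le> length x - l" "j - i < l" using assms True False by auto
      thus ?thesis using assms j False True by (simp add: rd_def ins_def nth_append tandem_dup_nth min_def)
    next
      case F2: False
      have i: "i \<le> j" "i \<le> length x - l" "\<not> j - i < l" "j - l < length x - l" using assms False F2 j by auto
      have e: "j - l + l = j" "i + (j - i - l) = j - l" using F2 by auto
      have "ins l i (rd p l x) ! j = rd p l x ! (j - l)"
        using i e by (auto simp add: ins_def nth_append min_def)
      also have "\<dots> = rd p l (tandem_dup l i x) ! j"
        using i e assms j F2 by (simp add: rd_def tandem_dup_nth)
      finally show ?thesis by simp
    qed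
  qed
qed

lemma wt_ins[simp]: "wt (ins l k z) = wt z"
proof -
  have "wt z = wt (take k z @ drop k z)" by simp
  thus ?thesis unfolding wt_def ins_def by (simp del: append_take_drop_id)
qed

lemma tstep_props:
  assumes "(tandem_step l ^^ k) x y"
  shows "length y = length x + k*l \<and> set y \<subseteq> set x \<and> wt (rd p l y) = wt (rd p l x)"
  using assms
proof (induction k arbitrary: y)
  case 0
  then show ?case by simp
next
  case (Suc k)
  from Suc.prems obtain z where z: "(tandem_step l ^^ k) x z" "tandem_step l z y" by auto
  from z(2) obtain i where i: "i + l \<le> length z" "y = tandem_dup l i z" unfolding tandem_step_def by auto
  show ?case using Suc.IH[OF z(1)] i set_tandem_dup[OF i(1)] rd_tandem_dup[OF i(1), of p] by auto
qed

lemma transfer: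
  assumes "(istep l ^^ k) (rd p l x) z" "l \<le> length x"
  shows "\<exists>y. (tandem_step l ^^ k) x y \<and> rd p l y = z"
  using assms(1)
proof (induction k arbitrary: z)
  case 0
  then show ?case by auto
next
  case (Suc k)
  from Suc.prems obtain z0 where z0: "(istep l ^^ k) (rd p l x) z0" "istep l z0 z" by auto
  from Suc.IH[OF z0(1)] obtain y where y: "(tandem_step l ^^ k) x y" "rd p l y = z0" by auto
  from z0(2) obtain i where i: "i \<le> length z0" "z = ins l i z0" unfolding istep_def by auto
  have ly: "length y = length x + k*l" using tstep_props[OF y(1), of p] by simp
  have il: "i + l \<le> length y" using i(1) y(2) ly assms(2) by auto
  have "tandem_step l y (tandem_dup l i y)" unfolding tandem_step_def using il by auto
  hence "(tandem_step l ^^ Suc k) x (tandem_dup l i y)" using y(1) by auto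
  moreover have "rd p l (tandem_dup l i y) = z" using rd_tandem_dup[OF il] y(2) i(2) by simp
  ultimately show ?case by blast
qed

lemma istep_props:
  assumes "(istep l ^^ k) z z'"
  shows "length z' = length z + k*l \<and> set z' \<subseteq> insert None (set z) \<and> wt z' = wt z"
  using assms
proof (induction k arbitrary: z')
  case 0
  then show ?case by auto
next
  case (Suc k)
  from Suc.prems obtain w where w: "(istep l ^^ k) z w" "istep l w z'" by auto
  from w(2) obtain i where i: "i \<le> length w" "z' = ins l i w" unfolding istep_def by auto
  have "set z' \<subseteq> insert None (set w)" using i by (auto simp: ins_def dest: in_set_takeD in_set_dropD)
  moreover have "wt z' = wt w" using i by simp
  moreover have "length z' = length w + l" using i by (simp add: ins_def)
  ultimately show ?case using Suc.IH[OF w(1)] by auto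
qed

lemma istep_prefix: "(istep l ^^ k) w (replicate (k*l) None @ w)"
proof (induction k)
  case 0
  then show ?case by simp
next
  case (Suc k)
  have "istep l (replicate (k*l) None @ w) (replicate (Suc k*l) None @ w)"
    unfolding istep_def ins_def
    by (rule exI[of _ 0]) (simp add: replicate_add[symmetric] add.commute)
  then show ?case using Suc by auto
qed

lemma istep_cons: "(istep l ^^ k) w w' \<Longrightarrow> (istep l ^^ k) (a # w) (a # w')"
proof (induction k arbitrary: w')
  case 0
  then show ?case by simp
next
  case (Suc k)
  from Suc.prems obtain v where v: "(istep l ^^ k) w v" "istep l v w'" by auto
  from v(2) obtain i where i: "i \<le> length v" "w' = ins l i v" unfolding istep_def by auto
  have "istep l (a # v) (a # w')" unfolding istep_def
    by (rule exI[of _ "Suc i"]) (simp add: i ins_def)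
  then show ?case using Suc.IH[OF v(1)] by auto
qed

lemma istep_trans: "(istep l ^^ k) u v \<Longrightarrow> (istep l ^^ m) v w \<Longrightarrow> (istep l ^^ (k+m)) u w"
  by (auto simp: relpowp_add)

definition Fs :: "nat \<Rightarrow> nat \<Rightarrow> 'a option list \<Rightarrow> 'a option list set" where
  "Fs l k z = {z'. (istep l ^^ k) z z'}"

lemma finite_Fs: "finite (Fs l k z)"
proof -
  have "Fs l k z \<subseteq> {xs. set xs \<subseteq> insert None (set z) \<and> length xs = length z + k*l}"
    unfolding Fs_def using istep_props by blast
  thus ?thesis by (rule finite_subset) (simp add: finite_lists_length_eq)
qed

lemma card_Fs: assumes "l > 0" shows "((wt z + k) choose k) \<le> card (Fs l k z)"
  using assms
proof (induction z arbitrary: k)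
  case Nil
  have "replicate (k*l) None @ [] \<in> Fs l k []" unfolding Fs_def using istep_prefix by blast
  hence "card (Fs l k []) > 0" using finite_Fs card_gt_0_iff by blast
  then show ?case by (simp add: wt_def Suc_le_eq)
next
  case (Cons a z)
  show ?case
  proof (cases a)
    case None
    have sub: "Cons a ` Fs l k z \<subseteq> Fs l k (a # z)" unfolding Fs_def using istep_cons by blast
    have "card (Cons a ` Fs l k z) = card (Fs l k z)" by (rule card_image) simp
    hence "card (Fs l k z) \<le> card (Fs l k (a # z))" using card_mono[OF finite_Fs sub] by simp
    moreover have "wt (a # z) = wt z" using None by (simp add: wt_def)
    ultimately show ?thesis using Cons.IH[OF Cons.prems, of k] by simp
  next
    case (Some v)
    define g where "g = (\<lambda>j w. replicate ((k-j)*l) None @ a # w)"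
    have sub: "(\<Union>j\<in>{..k}. g j ` Fs l j z) \<subseteq> Fs l k (a # z)"
    proof
      fix x assume "x \<in> (\<Union>j\<in>{..k}. g j ` Fs l j z)"
      then obtain j w where j: "j \<in> {..k}" and w: "w \<in> Fs l j z" and x: "x = g j w" by auto
      have "(istep l ^^ j) (a # z) (a # w)" using w istep_cons unfolding Fs_def by blast
      from istep_trans[OF this istep_prefix[of "k-j" l "a # w"]]
      have "(istep l ^^ k) (a # z) (g j w)" using j unfolding g_def by simp
      thus "x \<in> Fs l k (a # z)" unfolding Fs_def x by simp
    qed
    have lead: "length (takeWhile (\<lambda>e. e = None) (g j w)) = (k-j)*l" for j w
      using Some unfolding g_def by (subst takeWhile_append2) auto
    have disj: "g j1 ` Fs l j1 z \<inter> g j2 ` Fs l j2 z = {}" if "j1 \<in> {..k}" "j2 \<in> {..k}" "j1 \<noteq> j2" for j1 j2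
    proof (rule ccontr)
      assume "g j1 ` Fs l j1 z \<inter> g j2 ` Fs l j2 z \<noteq> {}"
      then obtain w1 w2 where "g j1 w1 = g j2 w2" by auto
      hence "(k-j1)*l = (k-j2)*l" using lead by metis
      hence "k - j1 = k - j2" using Cons.prems by simp
      thus False using that by auto
    qed
    have cimg: "card (g j ` Fs l j z) = card (Fs l j z)" for j
      by (rule card_image) (auto simp: inj_on_def g_def)
    have "card (\<Union>j\<in>{..k}. g j ` Fs l j z) = (\<Sum>j\<le>k. card (g j ` Fs l j z))"
      by (rule card_UN_disjoint) (auto simp: finite_Fs disj)
    also have "\<dots> = (\<Sum>j\<le>k. card (Fs l j z))" using cimg by simp
    finally have ce: "card (\<Union>j\<in>{..k}. g j ` Fs l j z) = (\<Sum>j\<le>k. card (Fs l j z))" .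
    have "(\<Sum>j\<le>k. (wt z + j) choose j) \<le> (\<Sum>j\<le>k. card (Fs l j z))"
      by (rule sum_mono) (rule Cons.IH[OF Cons.prems])
    hence "(\<Sum>j\<le>k. (wt z + j) choose j) \<le> card (Fs l k (a # z))"
      using card_mono[OF finite_Fs sub] ce by linarith
    moreover have "wt (a # z) = Suc (wt z)" using Some by (simp add: wt_def)
    ultimately show ?thesis by (simp add: sum_choose_lower)
  qed
qed

definition Zs :: "'a set \<Rightarrow> nat \<Rightarrow> nat \<Rightarrow> 'a option list set" where
  "Zs V M i = {z. length z = M \<and> set z \<subseteq> insert None (Some ` V) \<and> wt z = i}"

lemma Zs_0: "Zs V 0 i = (if i = 0 then {[]} else {})"
  by (auto simp: Zs_def wt_def)

lemma Zs_Suc_0: "Zs V (Suc M) 0 = Cons None ` Zs V M 0"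
proof
  show "Zs V (Suc M) 0 \<subseteq> Cons None ` Zs V M 0"
  proof
    fix z assume z: "z \<in> Zs V (Suc M) 0"
    then obtain a z' where az: "z = a # z'" by (cases z) (auto simp: Zs_def)
    thus "z \<in> Cons None ` Zs V M 0" using z by (cases a) (auto simp: Zs_def wt_def)
  qed
qed (auto simp: Zs_def wt_def)

lemma Zs_Suc_Suc: "Zs V (Suc M) (Suc j) = Cons None ` Zs V M (Suc j) \<union> (\<lambda>(v,z). Some v # z) ` (V \<times> Zs V M j)"
proof
  show "Zs V (Suc M) (Suc j) \<subseteq> Cons None ` Zs V M (Suc j) \<union> (\<lambda>(v,z). Some v # z) ` (V \<times> Zs V M j)"
  proof
    fix z assume z: "z \<in> Zs V (Suc M) (Suc j)"
    then obtain a z' where az: "z = a # z'" by (cases z) (auto simp: Zs_def)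
    show "z \<in> Cons None ` Zs V M (Suc j) \<union> (\<lambda>(v,z). Some v # z) ` (V \<times> Zs V M j)"
    proof (cases a)
      case None
      then show ?thesis using z az by (auto simp: Zs_def wt_def)
    next
      case (Some v)
      hence "v \<in> V" "z' \<in> Zs V M j" using z az by (auto simp: Zs_def wt_def)
      thus ?thesis using az Some by force
    qed
  qed
qed (auto simp: Zs_def wt_def)

lemma finite_Zs: "finite V \<Longrightarrow> finite (Zs V M i)"
proof -
  assume "finite V"
  have "Zs V M i \<subseteq> {xs. set xs \<subseteq> insert None (Some ` V) \<and> length xs = M}" by (auto simp: Zs_def)
  thus ?thesis by (rule finite_subset) (simp add: finite_lists_length_eq \<open>finite V\<close>)
qed

lemma card_Zs: "finite V \<Longrightarrow> card (Zs V M i) = (M choose i) * card V ^ i"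
proof (induction M arbitrary: i)
  case 0
  then show ?case by (simp add: Zs_0)
next
  case (Suc M)
  show ?case
  proof (cases i)
    case 0
    then show ?thesis using Suc by (simp add: Zs_Suc_0 card_image)
  next
    case (Suc j)
    have d: "Cons None ` Zs V M (Suc j) \<inter> (\<lambda>(v,z). Some v # z) ` (V \<times> Zs V M j) = {}" by auto
    have i2: "inj_on (\<lambda>(v,z). Some v # z) (V \<times> Zs V M j)" by (auto simp: inj_on_def)
    have "card (Zs V (Suc M) i) = card (Zs V M (Suc j)) + card (V \<times> Zs V M j)"
      unfolding Suc Zs_Suc_Suc
      by (subst card_Un_disjoint) (auto simp: d finite_Zs Suc.prems card_image i2)
    also have "\<dots> = (M choose Suc j) * card V ^ Suc j + card V * ((M choose j) * card V ^ j)"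
      using Suc.IH[OF Suc.prems] by (simp add: card_cartesian_product)
    also have "\<dots> = (Suc M choose i) * card V ^ i" unfolding Suc by (simp add: algebra_simps)
    finally show ?thesis .
  qed
qed

lemma rd_nth: "j < length x - l \<Longrightarrow> rd p l x ! j = (if x!j = x!(j+l) then None else Some ((x!(j+l) + p - x!j) mod p))"
  by (simp add: rd_def)

lemma mod_rec: "a < (p::nat) \<Longrightarrow> b < p \<Longrightarrow> b = (a + (if a = b then 0 else (b + p - a) mod p)) mod p"
proof (cases "a = b")
  case False
  assume "a < p" "b < p"
  have "(a + (b + p - a) mod p) mod p = (a + (b + p - a)) mod p" by (simp add: mod_add_right_eq)
  also have "a + (b + p - a) = b + p" using \<open>a < p\<close> by simp
  finally show ?thesis using False \<open>b < p\<close> by simp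
qed simp

lemma rd_inj: assumes "l > 0" "x \<in> words p N" "y \<in> words p N" "take l x = take l y" "rd p l x = rd p l y"
  shows "x = y"
proof (rule nth_equalityI)
  show "length x = length y" using assms by (simp add: words_def)
  have "\<forall>k'<k. k' < N \<longrightarrow> x!k' = y!k'" for k
  proof (induction k)
    case (Suc k)
    show ?case
    proof (intro allI impI)
      fix k' assume k': "k' < Suc k" "k' < N"
      show "x!k' = y!k'"
      proof (cases "k' < k")
        case True thus ?thesis using Suc k' by auto
      next
        case False
        hence kk: "k' = k" using k' by simp
        show ?thesis
        proof (cases "k < l")
          case True
          have "take l x ! k = take l y ! k" using assms(4) by simp
          thus ?thesis using True kk by simp
        next
          case False
          define j where "j = k - l"
          have jl: "j + l = k" "j < N - l" using False k' kk by (auto simp: j_def)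
          have xj: "x!j = y!j" using Suc jl assms(1) by auto
          have "rd p l x ! j = rd p l y ! j" using assms(5) by simp
          hence e: "(if x!j = x!(j+l) then None else Some ((x!(j+l) + p - x!j) mod p)) =
                    (if y!j = y!(j+l) then None else Some ((y!(j+l) + p - y!j) mod p))"
            using jl(2) assms(2,3) by (simp add: rd_nth words_def)
          have lt: "x!j < p" "x!k < p" "y!j < p" "y!k < p" using assms(2,3) jl k' kk
            by (auto simp: words_def)
          have dxy: "(if x!j = x!(j+l) then 0 else (x!(j+l) + p - x!j) mod p) = (if y!j = y!(j+l) then 0 else (y!(j+l) + p - y!j) mod p)"
            using e by (auto split: if_splits)
          have "x!(j+l) = (x!j + (if x!j = x!(j+l) then 0 else (x!(j+l) + p - x!j) mod p)) mod p"
            by (rule mod_rec) (use lt jl(1) in auto)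
          also have "\<dots> = (y!j + (if y!j = y!(j+l) then 0 else (y!(j+l) + p - y!j) mod p)) mod p"
            by (subst dxy) (simp only: xj)
          also have "\<dots> = y!(j+l)"
            by (rule mod_rec[symmetric]) (use lt jl(1) in auto)
          finally have "x!k = y!k" using jl(1) by simp
          thus ?thesis using kk by simp
        qed
      qed
    qed
  qed simp
  thus "\<And>i. i < length x \<Longrightarrow> x ! i = y ! i" using assms(2) by (auto simp: words_def)
qed

lemma rd_range: assumes "x \<in> words p N" shows "rd p l x \<in> Zs {1..<p} (N - l) (wt (rd p l x))"
proof -
  have "set (rd p l x) \<subseteq> insert None (Some ` {1..<p})"
  proof
    fix e assume "e \<in> set (rd p l x)"
    then obtain j where j: "j < N - l" "e = (if x!j = x!(j+l) then None else Some ((x!(j+l) + p - x!j) mod p))"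
      using assms by (auto simp: rd_def words_def)
    have lt: "x!j < p" "x!(j+l) < p" using assms j by (auto simp: words_def)
    show "e \<in> insert None (Some ` {1..<p})"
    proof (cases "x!j = x!(j+l)")
      case False
      have "(x!(j+l) + p - x!j) mod p \<noteq> 0"
      proof
        assume "(x!(j+l) + p - x!j) mod p = 0"
        then obtain q where q: "x!(j+l) + p - x!j = p * q" by auto
        have "0 < x!(j+l) + p - x!j" "x!(j+l) + p - x!j < 2 * p" using lt by auto
        hence "p * q < p * 2" "0 < p * q" using q by auto
        hence "q < 2" "q \<noteq> 0" by (simp_all only: mult_less_cancel1 mult_pos_pos) (auto)
        hence "q = 1" by linarith
        thus False using q False lt by simp
      qed
      moreover have "(x!(j+l) + p - x!j) mod p < p" using lt by simp
      ultimately show ?thesis using j False by auto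
    qed (use j in simp)
  qed
  thus ?thesis using assms by (simp add: Zs_def words_def)
qed

lemma card_words: "card (words p n) = p ^ n"
proof -
  have "words p n = {xs. set xs \<subseteq> {..<p} \<and> length xs = n}" by (auto simp: words_def)
  thus ?thesis by (simp add: card_lists_length_eq)
qed

lemma finite_words: "finite (words p n)"
proof -
  have "words p n = {xs. set xs \<subseteq> {..<p} \<and> length xs = n}" by (auto simp: words_def)
  thus ?thesis by (simp add: finite_lists_length_eq)
qed

lemma class_bound:
  assumes tdc: "tandem_dup_correcting p n l t C" and ln: "l \<le> n" and l0: "l > 0"
  shows "card {c\<in>C. wt (rd p l c) = i} * ((i+t) choose t) \<le> p^l * (((n + t*l - l) choose i) * (p-1)^i)"
proof -
  define Ci where "Ci = {c\<in>C. wt (rd p l c) = i}"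
  define D where "D = (\<lambda>c. {y. (tandem_step l ^^ t) c y})"
  define N where "N = n + t*l"
  define Y where "Y = {y \<in> words p N. wt (rd p l y) = i}"
  have CW: "C \<subseteq> words p n" using tdc by (simp add: tandem_dup_correcting_def)
  have finC: "finite C" using CW finite_words finite_subset by blast
  have finCi: "finite Ci" using finC by (simp add: Ci_def)
  have DY: "D c \<subseteq> Y" if "c \<in> Ci" for c
  proof
    fix y assume "y \<in> D c"
    hence "(tandem_step l ^^ t) c y" by (simp add: D_def)
    from tstep_props[OF this, of p] that CW show "y \<in> Y"
      by (auto simp: Y_def N_def words_def Ci_def)
  qed
  have finY: "finite Y" using finite_words by (simp add: Y_def)
  have finD: "finite (D c)" if "c \<in> Ci" for c using DY[OF that] finY finite_subset by blast
  have Dlow: "((i+t) choose t) \<le> card (D c)" if c: "c \<in> Ci" for c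
  proof -
    have lc: "l \<le> length c" using c CW ln by (auto simp: Ci_def words_def)
    have "Fs l t (rd p l c) \<subseteq> rd p l ` D c"
    proof
      fix z assume "z \<in> Fs l t (rd p l c)"
      from transfer[OF _ lc] this obtain y where "(tandem_step l ^^ t) c y" "rd p l y = z"
        unfolding Fs_def by blast
      thus "z \<in> rd p l ` D c" unfolding D_def by blast
    qed
    hence "card (Fs l t (rd p l c)) \<le> card (rd p l ` D c)" using finD[OF c] by (simp add: card_mono)
    also have "\<dots> \<le> card (D c)" using finD[OF c] card_image_le by blast
    finally show ?thesis using card_Fs[OF l0, of "rd p l c" t] c by (simp add: Ci_def)
  qed
  have disj: "D c \<inter> D c' = {}" if "c \<in> Ci" "c' \<in> Ci" "c \<noteq> c'" for c c'
  proof -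
    have "D c \<subseteq> tandem_ball l t c" "D c' \<subseteq> tandem_ball l t c'" by (auto simp: D_def tandem_ball_def)
    moreover have "tandem_ball l t c \<inter> tandem_ball l t c' = {}"
      using tdc that by (auto simp: tandem_dup_correcting_def Ci_def)
    ultimately show ?thesis by blast
  qed
  have "card Ci * ((i+t) choose t) = (\<Sum>c\<in>Ci. ((i+t) choose t))" by simp
  also have "\<dots> \<le> (\<Sum>c\<in>Ci. card (D c))" by (rule sum_mono) (rule Dlow)
  also have "\<dots> = card (\<Union>c\<in>Ci. D c)" by (rule card_UN_disjoint[symmetric]) (use finCi finD disj in auto)
  also have "\<dots> \<le> card Y" by (rule card_mono[OF finY]) (use DY in blast)
  also have "\<dots> \<le> card (words p l \<times> Zs {1..<p} (N - l) i)"
  proof -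
    have "inj_on (\<lambda>y. (take l y, rd p l y)) Y"
    proof (rule inj_onI)
      fix x y assume "x \<in> Y" "y \<in> Y" "(take l x, rd p l x) = (take l y, rd p l y)"
      thus "x = y" using rd_inj[OF l0, of x p N y] by (simp add: Y_def)
    qed
    moreover have "(\<lambda>y. (take l y, rd p l y)) ` Y \<subseteq> words p l \<times> Zs {1..<p} (N - l) i"
    proof (rule image_subsetI)
      fix y assume y: "y \<in> Y"
      have "length y = N" using y by (simp add: Y_def words_def)
      hence "take l y \<in> words p l" using y ln by (auto simp: Y_def words_def N_def dest: in_set_takeD)
      moreover have "rd p l y \<in> Zs {1..<p} (N - l) i" using rd_range[of y p N l] y by (simp add: Y_def)
      ultimately show "(take l y, rd p l y) \<in> words p l \<times> Zs {1..<p} (N - l) i" by auto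
    qed
    moreover have "finite (words p l \<times> Zs {1..<p} (N - l) i)"
      by (simp add: finite_Zs finite_words)
    ultimately show ?thesis using card_image card_mono by (metis (no_types, lifting))
  qed
  also have "\<dots> = p^l * (((N - l) choose i) * (p-1)^i)"
    by (simp add: card_cartesian_product card_words card_Zs)
  finally show ?thesis by (simp add: Ci_def N_def)
qed

lemma bound:
  assumes tdc: "tandem_dup_correcting p n l t C" and ln: "l \<le> n" and l0: "l > 0" and p2: "p \<ge> 2" and t0: "t > 0"
  shows "real (card C) * ((real p - 1)^t * (real n / real t)^t) \<le> real p ^ (n + t*l + t)"
proof -
  define M where "M = n + t*l - l"
  define K where "K = M + t"
  define Ci where "Ci = (\<lambda>i. {c\<in>C. wt (rd p l c) = i})"
  have CW: "C \<subseteq> words p n" using tdc by (simp add: tandem_dup_correcting_def)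
  have finC: "finite C" using CW finite_words finite_subset by blast
  have Cun: "C = (\<Union>i\<in>{..n-l}. Ci i)"
  proof
    show "C \<subseteq> (\<Union>i\<in>{..n-l}. Ci i)"
    proof
      fix c assume c: "c \<in> C"
      have "wt (rd p l c) \<le> length (rd p l c)" unfolding wt_def by (rule length_filter_le)
      also have "\<dots> = n - l" using c CW by (auto simp: words_def)
      finally show "c \<in> (\<Union>i\<in>{..n-l}. Ci i)" using c by (auto simp: Ci_def)
    qed
  qed (auto simp: Ci_def)
  have cardC: "card C = (\<Sum>i\<le>n-l. card (Ci i))"
    by (subst Cun, rule card_UN_disjoint) (use finC in \<open>auto simp: Ci_def\<close>)
  have pm: "real p - 1 \<ge> 1" using p2 by simp
  have Kt: "0 < real (K choose t)" by (simp add: K_def)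
  have each: "real (card (Ci i)) * ((real p - 1)^t * real (K choose t)) \<le> real p ^ l * ((real p - 1)^(i+t) * real (K choose (i+t)))"
    if i: "i \<le> n - l" for i
  proof -
    have cb: "real (card (Ci i)) * real ((i+t) choose t) \<le> real p ^ l * (real (M choose i) * (real p - 1)^i)"
    proof -
      have "card (Ci i) * ((i+t) choose t) \<le> p^l * ((M choose i) * (p-1)^i)"
        using class_bound[OF tdc ln l0, of i] by (simp add: Ci_def M_def)
      hence "real (card (Ci i) * ((i+t) choose t)) \<le> real (p^l * ((M choose i) * (p-1)^i))" by linarith
      thus ?thesis using p2 by (simp add: of_nat_diff)
    qed
    have cm: "(K choose (i+t)) * ((i+t) choose t) = (K choose t) * (M choose i)"
      using choose_mult[of t "i+t" K] i ln by (simp add: K_def M_def)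
    hence cmr: "real (K choose (i+t)) * real ((i+t) choose t) = real (K choose t) * real (M choose i)"
      by (metis of_nat_mult)
    have pos: "0 < real ((i+t) choose t)" by simp
    have "real (card (Ci i)) * ((real p - 1)^t * real (K choose t)) * real ((i+t) choose t)
        = (real (card (Ci i)) * real ((i+t) choose t)) * ((real p - 1)^t * real (K choose t))" by simp
    also have "\<dots> \<le> real p ^ l * (real (M choose i) * (real p - 1)^i) * ((real p - 1)^t * real (K choose t))"
      by (rule mult_right_mono[OF cb]) (use pm in simp)
    also have "\<dots> = real p ^ l * ((real p - 1)^(i+t) * real (K choose (i+t))) * real ((i+t) choose t)"
      using cmr by (simp add: power_add algebra_simps)
    finally show ?thesis using pos by simp
  qed
  have "real (card C) * ((real p - 1)^t * real (K choose t)) = (\<Sum>i\<le>n-l. real (card (Ci i)) * ((real p - 1)^t * real (K choose t)))"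
    by (simp add: cardC sum_distrib_right)
  also have "\<dots> \<le> (\<Sum>i\<le>n-l. real p ^ l * ((real p - 1)^(i+t) * real (K choose (i+t))))"
    by (rule sum_mono) (use each in simp)
  also have "\<dots> = real p ^ l * (\<Sum>j\<in>(\<lambda>i. i+t) ` {..n-l}. (real p - 1)^j * real (K choose j))"
    by (simp add: sum_distrib_left sum.reindex)
  also have "\<dots> \<le> real p ^ l * (\<Sum>j\<le>K. (real p - 1)^j * real (K choose j))"
  proof -
    have "(\<lambda>i. i+t) ` {..n-l} \<subseteq> {..K}" using ln by (auto simp: K_def M_def)
    hence "(\<Sum>j\<in>(\<lambda>i. i+t) ` {..n-l}. (real p - 1)^j * real (K choose j)) \<le> (\<Sum>j\<le>K. (real p - 1)^j * real (K choose j))"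
      by (intro sum_mono2) (use pm in auto)
    thus ?thesis by (simp add: mult_left_mono)
  qed
  also have "(\<Sum>j\<le>K. (real p - 1)^j * real (K choose j)) = real p ^ K"
    using binomial_ring[of "real p - 1" 1 K] by (simp add: mult.commute)
  finally have A: "real (card C) * ((real p - 1)^t * real (K choose t)) \<le> real p ^ (l + K)"
    by (simp add: power_add)
  have "l \<le> t*l" using t0 by simp
  hence Kn: "n \<le> K" using ln unfolding K_def M_def by linarith
  have "(real n / real t)^t \<le> (real K / real t)^t"
    by (rule power_mono) (use Kn in \<open>auto simp: divide_right_mono\<close>)
  also have "\<dots> \<le> real (K choose t)" by (rule binomial_ge_n_over_k_pow_k) (simp add: K_def)
  finally have B: "(real n / real t)^t \<le> real (K choose t)" .
  have "real (card C) * ((real p - 1)^t * (real n / real t)^t) \<le> real (card C) * ((real p - 1)^t * real (K choose t))"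
    by (intro mult_left_mono B) (use pm in auto)
  also note A
  also have "l + K = n + t*l + t" using ln by (simp add: K_def M_def)
  finally show ?thesis .
qed

lemma log0: "log b 0 = 0" by (simp add: log_def)

theorem lemma2:
  fixes p n l t :: nat and C :: "nat list set"
  assumes "p \<ge> 2" and "n > 0" and "l > 0" and "t > 0"
    and "tandem_dup_correcting p n l t C"
  shows "real n - log (real p) (real (card C))
           \<ge> real t * log (real p) (real n) - real t * log (real p) (real t * (real p - 1))
             - real t * (real l + 1)"
proof -
  have p1: "1 < real p" using assms(1) by simp
  have pm: "1 \<le> real p - 1" using assms(1) by simp
  have lt0: "0 \<le> log (real p) (real t)" using assms(4) p1 by simp
  have lpm0: "0 \<le> log (real p) (real p - 1)" using pm p1 by simp
  have ltp: "log (real p) (real t * (real p - 1)) = log (real p) (real t) + log (real p) (real p - 1)"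
    using assms(4) pm by (intro log_mult_pos) auto
  have CW: "C \<subseteq> words p n" using assms(5) by (simp add: tandem_dup_correcting_def)
  show ?thesis
  proof (cases "l \<le> n")
    case True
    define Q where "Q = (real p - 1)^t * (real n / real t)^t"
    have Qpos: "0 < Q" unfolding Q_def using pm assms(2,4) by simp
    define X where "X = max 1 (real (card C))"
    have XQ: "X * Q \<le> real p ^ (n + t*l + t)"
    proof (cases "card C = 0")
      case True
      have "tandem_dup_correcting p n l t {replicate n 0}"
        using assms(1) by (auto simp: tandem_dup_correcting_def words_def)
      from bound[OF this \<open>l \<le> n\<close> assms(3,1,4)] show ?thesis using True by (simp add: X_def Q_def)
    next
      case False
      thus ?thesis using bound[OF assms(5) \<open>l \<le> n\<close> assms(3,1,4)] by (simp add: X_def Q_def)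
    qed
    have X1: "1 \<le> X" by (simp add: X_def)
    have "log (real p) (X * Q) \<le> log (real p) (real p ^ (n + t*l + t))"
      using XQ X1 Qpos p1 by (subst log_le_cancel_iff) auto
    hence "log (real p) X + log (real p) Q \<le> real (n + t*l + t)"
      using X1 Qpos p1 by (simp add: log_mult_pos)
    moreover have "log (real p) Q = real t * log (real p) (real p - 1) + real t * (log (real p) (real n) - log (real p) (real t))"
      unfolding Q_def using pm assms(2,4)
      by (simp add: log_mult_pos log_nat_power log_divide_pos)
    moreover have "log (real p) (real (card C)) \<le> log (real p) X"
    proof (cases "card C = 0")
      case True thus ?thesis using X1 p1 by (simp add: log0)
    next
      case False thus ?thesis using p1 by (simp add: X_def)
    qed
    ultimately show ?thesis using ltp lpm0 assms(4)
      by (simp add: algebra_simps) (smt (verit) mult_nonneg_nonneg of_nat_0_le_iff)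
  next
    case False
    have cC: "card C \<le> p ^ n" using card_mono[OF finite_words CW] by (simp add: card_words)
    have lc: "log (real p) (real (card C)) \<le> real n"
    proof (cases "card C = 0")
      case True thus ?thesis by (simp add: log0)
    next
      case False
      have "real (card C) \<le> real p ^ n" using cC by (metis of_nat_le_iff of_nat_power)
      hence "log (real p) (real (card C)) \<le> log (real p) (real p ^ n)"
        using False p1 by (subst log_le_cancel_iff) auto
      thus ?thesis using p1 by simp
    qed
    have "n < 2 ^ n" by (rule less_exp)
    also have "(2::nat) ^ n \<le> p ^ n" using assms(1) by (simp add: power_mono)
    also have "p ^ n \<le> p ^ (l+1)" using False assms(1) by (intro power_increasing) auto
    finally have "real n \<le> real p ^ (l+1)" by (metis less_imp_le of_nat_le_iff of_nat_power)
    hence "log (real p) (real n) \<le> log (real p) (real p ^ (l+1))"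
      using assms(2) p1 by (subst log_le_cancel_iff) auto
    moreover have "log (real p) (real p ^ (l+1)) = real (l+1)" using p1 by (intro log_pow_cancel) auto
    ultimately have ln: "log (real p) (real n) \<le> real l + 1" by simp
    have "real t * log (real p) (real n) \<le> real t * (real l + 1)"
      using ln by (simp add: mult_left_mono)
    thus ?thesis using lc ltp lt0 lpm0 assms(4)
      by (smt (verit) mult_nonneg_nonneg of_nat_0_le_iff distrib_left)
  qed
qed

end
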